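(* Let $n\ge 2$ and let $\sigma_{n-1}=c_{n-1}-\lfloor\frac{n-1}{2}\rfloor$, where $c_{n-1}=\binom{n-1}{2}$. As elements of $R/J_n$: if $n$ is even, then $x_{nn}^{\sigma_{n-1}}\,p^+_{n}=p_n$; if $n$ is odd, then for every $i\in[n]$, $x_{nn}^{\sigma_{n-1}+1}\,p^+_{n,i}=x_{in}\,p_n$.
   Context: Let $\mathbbm{k}$ be a field, $[n]=\{1,\dots,n\}$, $R=\mathbbm{k}[x_{ij}:1\le i\le j\le n]$ with $x_{ij}=x_{ji}$; exponent vectors in $\mathbb{N}^{\binom{n+1}{2}}$ with basis $e_{ij}=e_{ji}$. $V_n$ is the $n\times\binom{n+1}{2}$ matrix whose column indexed by $jk$ is $e_j+e_k\in\mathbb{Z}^n$; for $\mathbf b\in\mathbb{N}^n$, $V_n^{-1}[\mathbf b]=\{u\in\mathbb{N}^{\binom{n+1}{2}}:V_nu=\mathbf b\}$. $J_n$ is generated by the principal $2$-minors $x_{ii}x_{jj}-x_{ij}^2$. With $[ij|kl]:=e_{ik}+e_{jl}-e_{il}-e_{jk}$, $L'_n$ is the lattice generated by the $[ij|ij]$; two points of a fiber are equivalent if their difference lies in $L'_n$ (equivalent monomials are equal in $R/J_n$). Define $p_n=\prod_{1\le i<j\le n-1}(x_{ij}x_{nn}+x_{in}x_{jn})$. If $n$ is odd, $p^+_{n,i}\in R/J_n$ is the sum of $x^{\mathbf a}$ over the equivalence classes $\mathbf a$ of $V_n^{-1}[(n-2,\dots,n-2)+e_i]$ modulo $L'_n$;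 if $n$ is even, $p^+_n\in R/J_n$ is the sum of $x^{\mathbf a}$ over the equivalence classes of $V_n^{-1}[(n-2,\dots,n-2)]$ modulo $L'_n$. *)

theory Defs
  imports Main "HOL-Library.Poly_Mapping"
begin

text \<open>Variables x_ij (i \<le> j) are indexed by ordered pairs (i,j) with 1 \<le> i \<le> j \<le> n.\<close>

type_synonym expvec = "(nat \<times> nat) \<Rightarrow>\<^sub>0 nat"
type_synonym 'k mpoly = "expvec \<Rightarrow>\<^sub>0 'k"

definition Pairs :: "nat \<Rightarrow> (nat \<times> nat) set" where
  "Pairs n = {(i,j). 1 \<le> i \<and> i \<le> j \<and> j \<le> n}"

definition OffPairs :: "nat \<Rightarrow> (nat \<times> nat) set" where
  "OffPairs n = {(i,j). 1 \<le> i \<and> i < j \<and> j \<le> n}"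

definition xmon :: "expvec \<Rightarrow> 'k::comm_ring_1 mpoly" where
  "xmon a = Poly_Mapping.single a 1"

definition xvar :: "nat \<Rightarrow> nat \<Rightarrow> 'k::comm_ring_1 mpoly" where
  "xvar i j = xmon (Poly_Mapping.single (min i j, max i j) 1)"

definition J :: "nat \<Rightarrow> 'k::comm_ring_1 mpoly set" where
  "J n = {f. \<exists>g. f = (\<Sum>(i,j)\<in>OffPairs n. g (i,j) * (xvar i i * xvar j j - xvar i j ^ 2))}"

definition eqJ :: "nat \<Rightarrow> 'k::comm_ring_1 mpoly \<Rightarrow> 'k mpoly \<Rightarrow> bool" where
  "eqJ n f g \<longleftrightarrow> f - g \<in> J n"

definition Vn :: "nat \<Rightarrow> expvec \<Rightarrow> nat \<Rightarrow> nat" where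
  "Vn n u k = (\<Sum>p\<in>Pairs n. Poly_Mapping.lookup u p *
        ((if fst p = k then 1 else 0) + (if snd p = k then 1 else 0)))"

definition fiber :: "nat \<Rightarrow> (nat \<Rightarrow> nat) \<Rightarrow> expvec set" where
  "fiber n b = {u. Poly_Mapping.keys u \<subseteq> Pairs n \<and> (\<forall>k\<in>{1..n}. Vn n u k = b k)}"

text \<open>the lattice generator [ij|ij] = e_ii + e_jj - e_ij - e_ji (for i < j), as a vector on pairs\<close>
definition gen_ij :: "nat \<times> nat \<Rightarrow> nat \<times> nat \<Rightarrow> int" where
  "gen_ij q p = (case q of (i,j) \<Rightarrow>
      (if p = (i,i) then 1 else 0) + (if p = (j,j) then 1 else 0) - (if p = (i,j) then 2 else 0))"

definition inLp :: "nat \<Rightarrow> expvec \<Rightarrow> expvec \<Rightarrow> bool" where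
  "inLp n u v \<longleftrightarrow> (\<exists>c :: nat \<times> nat \<Rightarrow> int. \<forall>p\<in>Pairs n.
       int (Poly_Mapping.lookup u p) - int (Poly_Mapping.lookup v p) = (\<Sum>q\<in>OffPairs n. c q * gen_ij q p))"

definition fiber_rel :: "nat \<Rightarrow> (nat \<Rightarrow> nat) \<Rightarrow> (expvec \<times> expvec) set" where
  "fiber_rel n b = {(u,v). u \<in> fiber n b \<and> v \<in> fiber n b \<and> inLp n u v}"

definition class_sum :: "nat \<Rightarrow> (nat \<Rightarrow> nat) \<Rightarrow> 'k::comm_ring_1 mpoly" where
  "class_sum n b = (\<Sum>C\<in>fiber n b // fiber_rel n b. xmon (SOME a. a \<in> C))"

definition p_plus_even :: "nat \<Rightarrow> 'k::comm_ring_1 mpoly" where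
  "p_plus_even n = class_sum n (\<lambda>_. n - 2)"

definition p_plus_odd :: "nat \<Rightarrow> nat \<Rightarrow> 'k::comm_ring_1 mpoly" where
  "p_plus_odd n i = class_sum n (\<lambda>k. n - 2 + (if k = i then 1 else 0))"

definition p_n :: "nat \<Rightarrow> 'k::comm_ring_1 mpoly" where
  "p_n n = (\<Prod>(i,j)\<in>{(i,j). 1 \<le> i \<and> i < j \<and> j \<le> n - 1}.
              xvar i j * xvar n n + xvar i n * xvar j n)"

definition sigma :: "nat \<Rightarrow> nat" where
  "sigma m = (m choose 2) - m div 2"

end

theory Submission
  imports Defs
begin


abbreviation lk :: "expvec \<Rightarrow> nat \<times> nat \<Rightarrow> nat" where "lk u p \<equiv> Poly_Mapping.lookup u p"
abbreviation ev :: "nat \<times> nat \<Rightarrow> expvec" where "ev p \<equiv> Poly_Mapping.single p 1"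

lemma xmon_mult: "xmon a * xmon b = (xmon (a+b) :: 'k::comm_ring_1 mpoly)"
  by (simp add: xmon_def mult_single)

lemma xmon_zero: "xmon 0 = (1 :: 'k::comm_ring_1 mpoly)"
  by (simp add: xmon_def)

lemma prod_xmon: "finite X \<Longrightarrow> (\<Prod>q\<in>X. xmon (f q)) = (xmon (\<Sum>q\<in>X. f q) :: 'k::comm_ring_1 mpoly)"
  by (induction X rule: finite_induct) (auto simp: xmon_zero xmon_mult)

lemma xvar_pow: "xvar i j ^ k = (xmon (Poly_Mapping.single (min i j, max i j) k) :: 'k::comm_ring_1 mpoly)"
  by (induction k) (auto simp: xvar_def xmon_zero xmon_mult single_add[symmetric])

definition Gm :: "nat \<times> nat \<Rightarrow> 'k::comm_ring_1 mpoly" where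
  "Gm q = xvar (fst q) (fst q) * xvar (snd q) (snd q) - xvar (fst q) (snd q) ^ 2"

lemma J_iff: "f \<in> J n \<longleftrightarrow> (\<exists>g. f = (\<Sum>q\<in>OffPairs n. g q * Gm q))"
  unfolding J_def Gm_def by (simp add: case_prod_beta)

lemma J_add: assumes "f \<in> J n" "g \<in> J n" shows "f + g \<in> J n"
proof -
  from assms obtain g1 g2 where
    "f = (\<Sum>q\<in>OffPairs n. g1 q * Gm q)" "g = (\<Sum>q\<in>OffPairs n. g2 q * Gm q)"
    unfolding J_iff by blast
  then have "f + g = (\<Sum>q\<in>OffPairs n. (g1 q + g2 q) * Gm q)"
    by (simp add: sum.distrib[symmetric] algebra_simps)
  then show ?thesis unfolding J_iff by (intro exI[of _ "\<lambda>q. g1 q + g2 q"])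
qed

lemma J_mult: assumes "f \<in> J n" shows "h * f \<in> J n"
proof -
  from assms obtain g1 where "f = (\<Sum>q\<in>OffPairs n. g1 q * Gm q)"
    unfolding J_iff by blast
  then have "h * f = (\<Sum>q\<in>OffPairs n. (h * g1 q) * Gm q)"
    by (simp add: sum_distrib_left algebra_simps)
  then show ?thesis unfolding J_iff by (intro exI[of _ "\<lambda>q. h * g1 q"])
qed

lemma J_zero: "0 \<in> J n"
proof -
  have "(0::'k::comm_ring_1 mpoly) = (\<Sum>q\<in>OffPairs n. 0 * Gm q)" by simp
  then show ?thesis unfolding J_iff by (intro exI[of _ "\<lambda>q. 0"])
qed

lemma finite_OffPairs: "finite (OffPairs n)"
  by (rule finite_subset[of _ "{1..n} \<times> {1..n}"]) (auto simp: OffPairs_def)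

lemma finite_Pairs: "finite (Pairs n)"
  by (rule finite_subset[of _ "{1..n} \<times> {1..n}"]) (auto simp: Pairs_def)

lemma J_gen: assumes "(i,j) \<in> OffPairs n"
  shows "h * (xvar i i * xvar j j - xvar i j ^ 2) \<in> J n"
proof -
  have "(\<Sum>q\<in>OffPairs n. (if q = (i,j) then h else 0) * Gm q)
      = (\<Sum>q\<in>OffPairs n. (if q = (i,j) then h * Gm (i,j) else 0))"
    by (rule sum.cong) auto
  also have "\<dots> = h * (xvar i i * xvar j j - xvar i j ^ 2)"
    using assms finite_OffPairs by (simp add: sum.delta' Gm_def)
  finally show ?thesis unfolding J_iff
    by (intro exI[of _ "\<lambda>q. if q = (i,j) then h else 0"]) (rule sym)
qed

lemma eqJ_refl: "eqJ n f f" by (simp add: eqJ_def J_zero)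
lemma eqJ_sym: "eqJ n f g \<Longrightarrow> eqJ n g f"
  unfolding eqJ_def using J_mult[of "f - g" n "-1"] by simp
lemma eqJ_trans: "eqJ n f g \<Longrightarrow> eqJ n g h \<Longrightarrow> eqJ n f h"
  unfolding eqJ_def using J_add[of "f - g" n "g - h"] by simp
lemma eqJ_mult: "eqJ n f g \<Longrightarrow> eqJ n (h * f) (h * g)"
  unfolding eqJ_def using J_mult[of "f - g" n h] by (simp add: algebra_simps)
lemma eqJ_sum: "(\<And>x. x \<in> X \<Longrightarrow> eqJ n (f x) (g x)) \<Longrightarrow> eqJ n (\<Sum>x\<in>X. f x) (\<Sum>x\<in>X. g x)"
proof (induction X rule: infinite_finite_induct)
  case (insert x F)
  then have "eqJ n (f x + sum f F) (g x + sum g F)"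
    unfolding eqJ_def using J_add[of "f x - g x" n "sum f F - sum g F"] by (simp add: algebra_simps)
  then show ?case using insert by simp
qed (auto simp: eqJ_refl)



lemma Vn_add: "Vn n (u+v) k = Vn n u k + Vn n v k"
  unfolding Vn_def by (simp add: lookup_add sum.distrib algebra_simps)

lemma Vn_zero: "Vn n 0 k = 0" by (simp add: Vn_def)

definition wt :: "nat \<times> nat \<Rightarrow> nat \<Rightarrow> nat" where
  "wt p k = (if fst p = k then 1 else 0) + (if snd p = k then 1 else 0)"

lemma Vn_alt: "Vn n u k = (\<Sum>p\<in>Pairs n. lk u p * wt p k)"
  unfolding Vn_def wt_def by simp

lemma Vn_single: assumes "p \<in> Pairs n" shows "Vn n (Poly_Mapping.single p c) k = c * wt p k"
proof -
  have "Vn n (Poly_Mapping.single p c) k = (\<Sum>q\<in>Pairs n. if q = p then c * wt p k else 0)"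
    unfolding Vn_alt by (rule sum.cong) (auto simp: lookup_single when_def)
  also have "\<dots> = c * wt p k" using assms finite_Pairs by (simp add: sum.delta')
  finally show ?thesis .
qed

lemma Vn_sum: "Vn n (\<Sum>x\<in>X. f x) k = (\<Sum>x\<in>X. Vn n (f x) k)"
  by (induction X rule: infinite_finite_induct) (auto simp: Vn_zero Vn_add)

definition nb :: "nat \<Rightarrow> nat \<Rightarrow> (nat \<times> nat) set" where
  "nb n k = {p \<in> OffPairs n. fst p = k \<or> snd p = k}"

lemma Pairs_split: "Pairs n = (\<lambda>i. (i,i)) ` {1..n} \<union> OffPairs n"
  by (auto simp: Pairs_def OffPairs_def)

lemma Vn_decomp: assumes "k \<in> {1..n}"
  shows "Vn n u k = 2 * lk u (k,k) + (\<Sum>p\<in>nb n k. lk u p)"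
proof -
  have disj: "(\<lambda>i. (i,i)) ` {1..n} \<inter> OffPairs n = {}" by (auto simp: OffPairs_def)
  have "Vn n u k = (\<Sum>p\<in>(\<lambda>i. (i,i)) ` {1..n}. lk u p * wt p k) + (\<Sum>p\<in>OffPairs n. lk u p * wt p k)"
    unfolding Vn_alt Pairs_split using disj finite_OffPairs by (simp add: sum.union_disjoint)
  also have "(\<Sum>p\<in>(\<lambda>i. (i,i)) ` {1..n}. lk u p * wt p k) = (\<Sum>i\<in>{1..n}. lk u (i,i) * wt (i,i) k)"
    by (subst sum.reindex) (auto simp: inj_on_def)
  also have "\<dots> = (\<Sum>i\<in>{1..n}. if i = k then 2 * lk u (k,k) else 0)"
    by (rule sum.cong) (auto simp: wt_def)
  also have "\<dots> = 2 * lk u (k,k)" using assms by simp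
  also have "(\<Sum>p\<in>OffPairs n. lk u p * wt p k) = (\<Sum>p\<in>OffPairs n. if fst p = k \<or> snd p = k then lk u p else 0)"
    by (rule sum.cong) (auto simp: wt_def OffPairs_def)
  also have "\<dots> = (\<Sum>p\<in>nb n k. lk u p)"
    unfolding nb_def using finite_OffPairs by (simp add: sum.inter_filter)
  finally show ?thesis .
qed

lemma sum_even_cong:
  fixes f g :: "'a \<Rightarrow> nat"
  shows "finite X \<Longrightarrow> (\<forall>x\<in>X. even (f x) \<longleftrightarrow> even (g x)) \<Longrightarrow> even (sum f X) \<longleftrightarrow> even (sum g X)"
  by (induction X rule: finite_induct) auto

lemma nb_split: assumes "1 \<le> k" "k < n"
  shows "nb n k = insert (k,n) {p \<in> OffPairs (n-1). fst p = k \<or> snd p = k}"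
    and "(k,n) \<notin> {p \<in> OffPairs (n-1). fst p = k \<or> snd p = k}"
  using assms by (auto simp: nb_def OffPairs_def)

lemma even2_cong: "2 * (a::nat) + x = 2 * b + y \<Longrightarrow> even x \<longleftrightarrow> even y"
  by presburger

lemma par_det:
  assumes V: "\<forall>k\<in>{1..n}. Vn n u k = Vn n v k"
    and P: "\<forall>p\<in>OffPairs (n-1). even (lk u p) \<longleftrightarrow> even (lk v p)"
    and p: "p \<in> OffPairs n"
  shows "even (lk u p) \<longleftrightarrow> even (lk v p)"
proof (cases "snd p < n")
  case True
  then have "p \<in> OffPairs (n-1)" using p by (auto simp: OffPairs_def)
  then show ?thesis using P by blast
next
  case False
  then obtain k where pk: "p = (k,n)" "1 \<le> k" "k < n" using p by (cases p) (auto simp: OffPairs_def)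
  let ?A = "{p \<in> OffPairs (n-1). fst p = k \<or> snd p = k}"
  have fA: "finite ?A" using finite_OffPairs by simp
  have dec: "\<And>x. Vn n x k = 2 * lk x (k,k) + (lk x (k,n) + (\<Sum>q\<in>?A. lk x q))"
    using Vn_decomp[of k n] pk nb_split[OF pk(2,3)] fA by simp
  have se: "even (\<Sum>q\<in>?A. lk u q) \<longleftrightarrow> even (\<Sum>q\<in>?A. lk v q)"
    using sum_even_cong[OF fA] P by blast
  have "Vn n u k = Vn n v k" using V pk by auto
  then have "2 * lk u (k,k) + (lk u (k,n) + (\<Sum>q\<in>?A. lk u q)) = 2 * lk v (k,k) + (lk v (k,n) + (\<Sum>q\<in>?A. lk v q))"
    using dec by simp
  then have "even (lk u (k,n) + (\<Sum>q\<in>?A. lk u q)) \<longleftrightarrow> even (lk v (k,n) + (\<Sum>q\<in>?A. lk v q))"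
    by (rule even2_cong)
  with se show ?thesis unfolding even_add pk(1) by blast
qed

lemma keys_sub: "Poly_Mapping.keys u \<subseteq> P \<longleftrightarrow> (\<forall>q. lk u q \<noteq> 0 \<longrightarrow> q \<in> P)"
  by (auto simp: in_keys_iff)

lemma reduce_step:
  assumes ij: "(i,j) \<in> OffPairs n" and K: "Poly_Mapping.keys u \<subseteq> Pairs n" and two: "lk u (i,j) \<ge> 2"
  obtains u' where "Poly_Mapping.keys u' \<subseteq> Pairs n" "\<forall>k. Vn n u' k = Vn n u k"
    "\<forall>q\<in>OffPairs n. even (lk u' q) \<longleftrightarrow> even (lk u q)"
    "(\<Sum>q\<in>OffPairs n. lk u' q) < (\<Sum>q\<in>OffPairs n. lk u q)"
    "eqJ n (xmon u) (xmon u' :: 'k::comm_ring_1 mpoly)"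
proof -
  define w0 where "w0 = u - Poly_Mapping.single (i,j) 2"
  have ueq: "u = w0 + Poly_Mapping.single (i,j) 2"
    by (rule poly_mapping_eqI) (use two in \<open>auto simp: w0_def lookup_add lookup_minus lookup_single when_def\<close>)
  define u' where "u' = w0 + ev (i,i) + ev (j,j)"
  have ijp: "i < j" "1 \<le> i" "j \<le> n" using ij by (auto simp: OffPairs_def)
  have P1: "(i,j) \<in> Pairs n" "(i,i) \<in> Pairs n" "(j,j) \<in> Pairs n" using ijp by (auto simp: Pairs_def)
  have lw: "\<And>q. lk u q = lk w0 q + (if q = (i,j) then 2 else 0)"
    by (subst ueq) (auto simp: lookup_add lookup_single when_def)
  have lu': "\<And>q. lk u' q = lk w0 q + (if q = (i,i) then 1 else 0) + (if q = (j,j) then 1 else 0)"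
    unfolding u'_def by (auto simp: lookup_add lookup_single when_def)
  show ?thesis
  proof
    show "Poly_Mapping.keys u' \<subseteq> Pairs n" unfolding keys_sub
    proof (intro allI impI)
      fix q assume "lk u' q \<noteq> 0"
      then consider "lk w0 q \<noteq> 0" | "q = (i,i)" | "q = (j,j)" using lu'[of q] by (auto split: if_splits)
      then show "q \<in> Pairs n"
      proof cases
        case 1 then have "lk u q \<noteq> 0" using lw[of q] by simp
        then show ?thesis using K by (auto simp: in_keys_iff)
      qed (use P1 in auto)
    qed
    show "\<forall>k. Vn n u' k = Vn n u k"
    proof
      fix k
      have "Vn n u k = Vn n w0 k + 2 * wt (i,j) k"
        by (subst ueq) (simp add: Vn_add Vn_single[OF P1(1)])
      moreover have "Vn n u' k = Vn n w0 k + wt (i,i) k + wt (j,j) k"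
        by (simp add: u'_def Vn_add Vn_single[OF P1(2)] Vn_single[OF P1(3)])
      ultimately show "Vn n u' k = Vn n u k" by (simp add: wt_def)
    qed
    show "\<forall>q\<in>OffPairs n. even (lk u' q) \<longleftrightarrow> even (lk u q)"
      using lw lu' by (auto simp: OffPairs_def)
    have "(\<Sum>q\<in>OffPairs n. lk u q) = (\<Sum>q\<in>OffPairs n. lk w0 q) + (\<Sum>q\<in>OffPairs n. if q = (i,j) then 2 else 0)"
      using lw by (simp add: sum.distrib)
    also have "(\<Sum>q\<in>OffPairs n. if q = (i,j) then 2 else 0) = (2::nat)"
      using ij finite_OffPairs by (simp add: sum.delta')
    moreover have "(\<Sum>q\<in>OffPairs n. lk u' q) = (\<Sum>q\<in>OffPairs n. lk w0 q)"
      by (rule sum.cong) (auto simp: lu' OffPairs_def)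
    ultimately show "(\<Sum>q\<in>OffPairs n. lk u' q) < (\<Sum>q\<in>OffPairs n. lk u q)" by simp
    have "xmon u = xmon w0 * (xvar i j ^ 2 :: 'k mpoly)"
      using ijp by (subst ueq) (simp add: xvar_pow xmon_mult)
    moreover have "xmon u' = xmon w0 * (xvar i i * xvar j j :: 'k mpoly)"
      by (simp add: u'_def xvar_def xmon_mult mult.assoc add.assoc)
    ultimately have "xmon u - xmon u' = (- xmon w0) * (xvar i i * xvar j j - xvar i j ^ 2 :: 'k mpoly)"
      by (simp add: algebra_simps)
    then show "eqJ n (xmon u) (xmon u' :: 'k::comm_ring_1 mpoly)"
      unfolding eqJ_def using J_gen[OF ij] by metis
  qed
qed

lemma Pairs_cases: "q \<in> Pairs n \<Longrightarrow> q \<in> OffPairs n \<or> (\<exists>k\<in>{1..n}. q = (k,k))"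
  by (cases q) (auto simp: Pairs_def OffPairs_def)

lemma key_aux:
  "(\<Sum>q\<in>OffPairs n. lk u q + lk v q) = N \<Longrightarrow> Poly_Mapping.keys u \<subseteq> Pairs n \<Longrightarrow> Poly_Mapping.keys v \<subseteq> Pairs n \<Longrightarrow>
   \<forall>k\<in>{1..n}. Vn n u k = Vn n v k \<Longrightarrow> \<forall>p\<in>OffPairs n. even (lk u p) \<longleftrightarrow> even (lk v p) \<Longrightarrow>
   eqJ n (xmon u) (xmon v :: 'k::comm_ring_1 mpoly)"
proof (induction N arbitrary: u v rule: less_induct)
  case (less N u v)
  show ?case
  proof (cases "\<exists>p\<in>OffPairs n. lk u p \<ge> 2")
    case True
    then obtain i j where ij: "(i,j) \<in> OffPairs n" "lk u (i,j) \<ge> 2" by auto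
    obtain u' where u': "Poly_Mapping.keys u' \<subseteq> Pairs n" "\<forall>k. Vn n u' k = Vn n u k"
      "\<forall>q\<in>OffPairs n. even (lk u' q) \<longleftrightarrow> even (lk u q)"
      "(\<Sum>q\<in>OffPairs n. lk u' q) < (\<Sum>q\<in>OffPairs n. lk u q)"
      "eqJ n (xmon u) (xmon u' :: 'k::comm_ring_1 mpoly)"
      using reduce_step[OF ij(1) less.prems(2) ij(2)] by metis
    have "(\<Sum>q\<in>OffPairs n. lk u' q + lk v q) < N"
      using u'(4) less.prems(1) by (simp add: sum.distrib)
    then have "eqJ n (xmon u') (xmon v :: 'k mpoly)"
      using less.IH[OF _ refl u'(1) less.prems(3)] u'(2,3) less.prems(4,5) by auto
    then show ?thesis using u'(5) eqJ_trans by blast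
  next
    case F1: False
    show ?thesis
    proof (cases "\<exists>p\<in>OffPairs n. lk v p \<ge> 2")
      case True
      then obtain i j where ij: "(i,j) \<in> OffPairs n" "lk v (i,j) \<ge> 2" by auto
      obtain v' where v': "Poly_Mapping.keys v' \<subseteq> Pairs n" "\<forall>k. Vn n v' k = Vn n v k"
        "\<forall>q\<in>OffPairs n. even (lk v' q) \<longleftrightarrow> even (lk v q)"
        "(\<Sum>q\<in>OffPairs n. lk v' q) < (\<Sum>q\<in>OffPairs n. lk v q)"
        "eqJ n (xmon v) (xmon v' :: 'k::comm_ring_1 mpoly)"
        using reduce_step[OF ij(1) less.prems(3) ij(2)] by metis
      have "(\<Sum>q\<in>OffPairs n. lk u q + lk v' q) < N"
        using v'(4) less.prems(1) by (simp add: sum.distrib)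
      then have "eqJ n (xmon u) (xmon v' :: 'k mpoly)"
        using less.IH[OF _ refl less.prems(2) v'(1)] v'(2,3) less.prems(4,5) by auto
      then show ?thesis using v'(5) eqJ_trans eqJ_sym by blast
    next
      case F2: False
      have off: "lk u q = lk v q" if "q \<in> OffPairs n" for q
      proof -
        have "lk u q \<le> 1" "lk v q \<le> 1" using F1 F2 that by force+
        moreover have "even (lk u q) \<longleftrightarrow> even (lk v q)" using less.prems(5) that by blast
        ultimately show ?thesis by presburger
      qed
      have "u = v"
      proof (rule poly_mapping_eqI)
        fix q
        show "lk u q = lk v q"
        proof (cases "q \<in> Pairs n")
          case True
          then consider "q \<in> OffPairs n" | k where "k \<in> {1..n}" "q = (k,k)" using Pairs_cases by blast
          then show ?thesis
          proof cases
            case 2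
            have "(\<Sum>p\<in>nb n k. lk u p) = (\<Sum>p\<in>nb n k. lk v p)"
              by (rule sum.cong) (auto simp: nb_def off)
            then show ?thesis using Vn_decomp[OF 2(1), of u] Vn_decomp[OF 2(1), of v] less.prems(4) 2 by auto
          qed (rule off)
        next
          case False
          then have "q \<notin> Poly_Mapping.keys u" "q \<notin> Poly_Mapping.keys v" using less.prems(2,3) by blast+
          then show ?thesis by (simp add: in_keys_iff)
        qed
      qed
      then show ?thesis by (simp add: eqJ_refl)
    qed
  qed
qed

lemma key:
  "Poly_Mapping.keys u \<subseteq> Pairs n \<Longrightarrow> Poly_Mapping.keys v \<subseteq> Pairs n \<Longrightarrow>
   \<forall>k\<in>{1..n}. Vn n u k = Vn n v k \<Longrightarrow> \<forall>p\<in>OffPairs n. even (lk u p) \<longleftrightarrow> even (lk v p) \<Longrightarrow>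
   eqJ n (xmon u) (xmon v :: 'k::comm_ring_1 mpoly)"
  using key_aux by blast



lemma gen_off: assumes "q \<in> OffPairs n" "p \<in> OffPairs n"
  shows "gen_ij q p = (if q = p then -2 else 0)"
  using assms by (cases q; cases p) (auto simp: gen_ij_def OffPairs_def)

lemma gen_diag: assumes "q \<in> OffPairs n"
  shows "gen_ij q (k,k) = int (wt q k)"
  using assms by (cases q) (auto simp: gen_ij_def OffPairs_def wt_def)

lemma inLp_parity: assumes "inLp n u v" "p \<in> OffPairs n"
  shows "even (lk u p) \<longleftrightarrow> even (lk v p)"
proof -
  obtain c where c: "\<forall>p\<in>Pairs n. int (lk u p) - int (lk v p) = (\<Sum>q\<in>OffPairs n. c q * gen_ij q p)"
    using assms(1) unfolding inLp_def by blast
  have pP: "p \<in> Pairs n" using assms(2) by (auto simp: OffPairs_def Pairs_def)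
  have "(\<Sum>q\<in>OffPairs n. c q * gen_ij q p) = (\<Sum>q\<in>OffPairs n. if q = p then -2 * c p else 0)"
    by (rule sum.cong) (auto simp: gen_off[OF _ assms(2)])
  also have "\<dots> = -2 * c p" using assms(2) finite_OffPairs by (simp add: sum.delta')
  finally have "int (lk u p) - int (lk v p) = -2 * c p" using c pP by auto
  then have "even (int (lk u p) - int (lk v p))" by simp
  then show ?thesis by simp
qed

lemma inLp_of_parity:
  assumes V: "\<forall>k\<in>{1..n}. Vn n u k = Vn n v k"
    and P: "\<forall>p\<in>OffPairs n. even (lk u p) \<longleftrightarrow> even (lk v p)"
  shows "inLp n u v"
proof -
  define c where "c q = (int (lk v q) - int (lk u q)) div 2" for q
  have c2: "2 * c q = int (lk v q) - int (lk u q)" if "q \<in> OffPairs n" for q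
  proof -
    have "even (int (lk v q) - int (lk u q))" using P that by simp
    then show ?thesis unfolding c_def by simp
  qed
  have "int (lk u p) - int (lk v p) = (\<Sum>q\<in>OffPairs n. c q * gen_ij q p)" if pP: "p \<in> Pairs n" for p
  proof -
    consider "p \<in> OffPairs n" | k where "k \<in> {1..n}" "p = (k,k)" using Pairs_cases[OF pP] by blast
    then show ?thesis
    proof cases
      case 1
      have "(\<Sum>q\<in>OffPairs n. c q * gen_ij q p) = (\<Sum>q\<in>OffPairs n. if q = p then -2 * c p else 0)"
        by (rule sum.cong) (auto simp: gen_off[OF _ 1])
      also have "\<dots> = -2 * c p" using 1 finite_OffPairs by (simp add: sum.delta')
      finally show ?thesis using c2[OF 1] by simp
    next
      case 2
      have "(\<Sum>q\<in>OffPairs n. c q * gen_ij q p) = (\<Sum>q\<in>OffPairs n. if fst q = k \<or> snd q = k then c q else 0)"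
        by (rule sum.cong) (auto simp: 2 gen_diag wt_def OffPairs_def)
      also have "\<dots> = (\<Sum>q\<in>nb n k. c q)"
        unfolding nb_def using finite_OffPairs by (simp add: sum.inter_filter)
      finally have e1: "(\<Sum>q\<in>OffPairs n. c q * gen_ij q p) = (\<Sum>q\<in>nb n k. c q)" .
      have "2 * lk u (k,k) + (\<Sum>q\<in>nb n k. lk u q) = 2 * lk v (k,k) + (\<Sum>q\<in>nb n k. lk v q)"
        using V 2 Vn_decomp[OF 2(1), of u] Vn_decomp[OF 2(1), of v] by auto
      then have "int (2 * lk u (k,k) + (\<Sum>q\<in>nb n k. lk u q)) = int (2 * lk v (k,k) + (\<Sum>q\<in>nb n k. lk v q))"
        by (rule arg_cong)
      then have "2 * int (lk u (k,k)) + (\<Sum>q\<in>nb n k. int (lk u q)) = 2 * int (lk v (k,k)) + (\<Sum>q\<in>nb n k. int (lk v q))"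
        by (simp add: of_nat_sum)
      moreover have "(\<Sum>q\<in>nb n k. 2 * c q) = (\<Sum>q\<in>nb n k. int (lk v q)) - (\<Sum>q\<in>nb n k. int (lk u q))"
        by (simp add: sum_subtractf[symmetric] c2 nb_def)
      moreover have "(\<Sum>q\<in>nb n k. 2 * c q) = 2 * (\<Sum>q\<in>nb n k. c q)"
        by (rule sum_distrib_left[symmetric])
      ultimately have "2 * int (lk u (k,k)) - 2 * int (lk v (k,k)) = 2 * (\<Sum>q\<in>nb n k. c q)"
        by linarith
      then show ?thesis using e1 2 by simp
    qed
  qed
  then show ?thesis unfolding inLp_def by blast
qed

lemma fiberD: "u \<in> fiber n b \<Longrightarrow> Poly_Mapping.keys u \<subseteq> Pairs n \<and> (\<forall>k\<in>{1..n}. Vn n u k = b k)"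
  by (simp add: fiber_def)

lemma fiber_rel_iff: assumes "u \<in> fiber n b" "v \<in> fiber n b"
  shows "(u,v) \<in> fiber_rel n b \<longleftrightarrow> (\<forall>p\<in>OffPairs n. even (lk u p) \<longleftrightarrow> even (lk v p))"
  using assms inLp_parity inLp_of_parity[of n u v] fiberD[OF assms(1)] fiberD[OF assms(2)]
  by (auto simp: fiber_rel_def)

lemma equiv_fiber: "equiv (fiber n b) (fiber_rel n b)"
proof (rule equivI)
  show "fiber_rel n b \<subseteq> fiber n b \<times> fiber n b" by (auto simp: fiber_rel_def)
  show "refl_on (fiber n b) (fiber_rel n b)"
    unfolding refl_on_def using fiber_rel_iff by blast
  show "sym (fiber_rel n b)"
    unfolding sym_def
  proof (intro allI impI)
    fix x y assume xy: "(x,y) \<in> fiber_rel n b"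
    then have F: "x \<in> fiber n b" "y \<in> fiber n b" by (auto simp: fiber_rel_def)
    show "(y,x) \<in> fiber_rel n b"
      using fiber_rel_iff[OF F(1,2)] fiber_rel_iff[OF F(2,1)] xy by blast
  qed
  show "trans (fiber_rel n b)"
    unfolding trans_def
  proof (intro allI impI)
    fix x y z assume xy: "(x,y) \<in> fiber_rel n b" and yz: "(y,z) \<in> fiber_rel n b"
    then have F: "x \<in> fiber n b" "y \<in> fiber n b" "z \<in> fiber n b" by (auto simp: fiber_rel_def)
    show "(x,z) \<in> fiber_rel n b"
      using fiber_rel_iff[OF F(1,2)] fiber_rel_iff[OF F(2,3)] fiber_rel_iff[OF F(1,3)] xy yz by blast
  qed
qed

lemma assemble:
  fixes e :: expvec and m :: "(nat \<times> nat) set \<Rightarrow> expvec" and b :: "nat \<Rightarrow> nat"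
  assumes eK: "Poly_Mapping.keys e \<subseteq> Pairs n" and eA: "\<forall>q\<in>OffPairs (n-1). lk e q = 0"
   and mK: "\<And>S. S \<subseteq> OffPairs (n-1) \<Longrightarrow> Poly_Mapping.keys (m S) \<subseteq> Pairs n"
   and mV: "\<And>S k. S \<subseteq> OffPairs (n-1) \<Longrightarrow> k \<in> {1..n} \<Longrightarrow> Vn n (m S) k = b k + Vn n e k"
   and mP: "\<And>S q. S \<subseteq> OffPairs (n-1) \<Longrightarrow> q \<in> OffPairs (n-1) \<Longrightarrow> odd (lk (m S) q) \<longleftrightarrow> q \<in> S"
   and surj: "\<And>S. S \<subseteq> OffPairs (n-1) \<Longrightarrow> \<exists>u\<in>fiber n b. \<forall>q\<in>OffPairs (n-1). odd (lk u q) \<longleftrightarrow> q \<in> S"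
  shows "eqJ n (xmon e * class_sum n b) (\<Sum>S\<in>Pow (OffPairs (n-1)). xmon (m S) :: 'k::comm_ring_1 mpoly)"
proof -
  let ?A = "OffPairs (n-1)"
  let ?F = "fiber n b" and ?r = "fiber_rel n b"
  let ?Q = "?F // ?r"
  define rep where "rep C = (SOME a. a \<in> C)" for C :: "expvec set"
  have eqv: "equiv ?F ?r" by (rule equiv_fiber)
  have repC: "rep C \<in> C" "rep C \<in> ?F" if "C \<in> ?Q" for C
  proof -
    have "C \<noteq> {}" using in_quotient_imp_non_empty[OF eqv that] .
    then show "rep C \<in> C" unfolding rep_def by (simp add: some_in_eq)
    then show "rep C \<in> ?F" using in_quotient_imp_subset[OF eqv that] by blast
  qed
  have fibpar: "\<forall>p\<in>OffPairs n. even (lk u p) \<longleftrightarrow> even (lk v p)"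
    if "u \<in> ?F" "v \<in> ?F" "\<forall>q\<in>?A. odd (lk u q) \<longleftrightarrow> odd (lk v q)" for u v
  proof
    fix p assume p: "p \<in> OffPairs n"
    have V: "\<forall>k\<in>{1..n}. Vn n u k = Vn n v k" using fiberD[OF that(1)] fiberD[OF that(2)] by simp
    have P: "\<forall>p\<in>OffPairs (n-1). even (lk u p) \<longleftrightarrow> even (lk v p)" using that(3) by blast
    show "even (lk u p) \<longleftrightarrow> even (lk v p)" by (rule par_det[OF V P p])
  qed
  define h where "h C = {q \<in> ?A. odd (lk (rep C) q)}" for C
  have bij: "bij_betw h ?Q (Pow ?A)"
    unfolding bij_betw_def
  proof
    show "inj_on h ?Q"
    proof (rule inj_onI)
      fix C1 C2 assume C: "C1 \<in> ?Q" "C2 \<in> ?Q" and hh: "h C1 = h C2"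
      have "\<forall>q\<in>?A. odd (lk (rep C1) q) \<longleftrightarrow> odd (lk (rep C2) q)"
        using hh unfolding h_def by blast
      then have "\<forall>p\<in>OffPairs n. even (lk (rep C1) p) \<longleftrightarrow> even (lk (rep C2) p)"
        by (rule fibpar[OF repC(2)[OF C(1)] repC(2)[OF C(2)]])
      then have "(rep C1, rep C2) \<in> ?r"
        using fiber_rel_iff[OF repC(2)[OF C(1)] repC(2)[OF C(2)]] by simp
      then show "C1 = C2" using quotient_eq_iff[OF eqv C(1,2) repC(1)[OF C(1)] repC(1)[OF C(2)]] by blast
    qed
    show "h ` ?Q = Pow ?A"
    proof
      show "h ` ?Q \<subseteq> Pow ?A" unfolding h_def by auto
      show "Pow ?A \<subseteq> h ` ?Q"
      proof
        fix S assume "S \<in> Pow ?A"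
        then have S: "S \<subseteq> ?A" by auto
        obtain u where u: "u \<in> ?F" "\<forall>q\<in>?A. odd (lk u q) \<longleftrightarrow> q \<in> S" using surj[OF S] by blast
        define C where "C = ?r `` {u}"
        have CQ: "C \<in> ?Q" unfolding C_def using u(1) by (rule quotientI)
        have "(u, rep C) \<in> ?r" using repC(1)[OF CQ] unfolding C_def by blast
        then have "\<forall>p\<in>OffPairs n. even (lk u p) \<longleftrightarrow> even (lk (rep C) p)"
          using fiber_rel_iff[OF u(1) repC(2)[OF CQ]] by simp
        moreover have "?A \<subseteq> OffPairs n" by (auto simp: OffPairs_def)
        ultimately have "\<forall>q\<in>?A. odd (lk (rep C) q) \<longleftrightarrow> q \<in> S" using u(2) by blast
        then have "h C = S" unfolding h_def using S by blast
        then show "S \<in> h ` ?Q" using CQ by blast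
      qed
    qed
  qed
  have "xmon e * class_sum n b = (\<Sum>C\<in>?Q. xmon (e + rep C) :: 'k mpoly)"
    unfolding class_sum_def rep_def by (simp add: sum_distrib_left xmon_mult)
  moreover have "(\<Sum>S\<in>Pow ?A. xmon (m S) :: 'k mpoly) = (\<Sum>C\<in>?Q. xmon (m (h C)))"
    using sum.reindex_bij_betw[OF bij, of "\<lambda>S. xmon (m S) :: 'k mpoly"] by simp
  moreover have "eqJ n (\<Sum>C\<in>?Q. xmon (e + rep C) :: 'k mpoly) (\<Sum>C\<in>?Q. xmon (m (h C)))"
  proof (rule eqJ_sum)
    fix C assume CQ: "C \<in> ?Q"
    have hA: "h C \<subseteq> ?A" unfolding h_def by auto
    have rf: "Poly_Mapping.keys (rep C) \<subseteq> Pairs n" "\<forall>k\<in>{1..n}. Vn n (rep C) k = b k"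
      using fiberD[OF repC(2)[OF CQ]] by auto
    show "eqJ n (xmon (e + rep C)) (xmon (m (h C)) :: 'k mpoly)"
    proof (rule key)
      show "Poly_Mapping.keys (e + rep C) \<subseteq> Pairs n" using keys_add[of e "rep C"] eK rf(1) by blast
      show "Poly_Mapping.keys (m (h C)) \<subseteq> Pairs n" using mK[OF hA] .
      show V: "\<forall>k\<in>{1..n}. Vn n (e + rep C) k = Vn n (m (h C)) k"
        using rf(2) mV[OF hA] by (simp add: Vn_add)
      have "\<forall>q\<in>?A. even (lk (e + rep C) q) \<longleftrightarrow> even (lk (m (h C)) q)"
        using eA mP[OF hA] by (auto simp: lookup_add h_def)
      then show "\<forall>p\<in>OffPairs n. even (lk (e + rep C) p) \<longleftrightarrow> even (lk (m (h C)) p)"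
        using par_det[OF V] by blast
    qed
  qed
  ultimately show ?thesis by simp
qed



lemma keys_sum_sub: "(\<And>x. x \<in> X \<Longrightarrow> Poly_Mapping.keys (f x) \<subseteq> P) \<Longrightarrow> Poly_Mapping.keys (\<Sum>x\<in>X. f x) \<subseteq> P"
proof (induction X rule: infinite_finite_induct)
  case (insert x F)
  then show ?case using keys_add[of "f x" "sum f F"] by auto
qed auto

lemma card_OffPairs: "card (OffPairs m) = m choose 2"
proof (induction m)
  case 0
  have "OffPairs 0 = {}" by (auto simp: OffPairs_def)
  then show ?case by simp
next
  case (Suc m)
  have eq: "OffPairs (Suc m) = OffPairs m \<union> (\<lambda>i. (i, Suc m)) ` {1..m}"
    by (auto simp: OffPairs_def)
  have d: "OffPairs m \<inter> (\<lambda>i. (i, Suc m)) ` {1..m} = {}" by (auto simp: OffPairs_def)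
  have "card (OffPairs (Suc m)) = card (OffPairs m) + card ((\<lambda>i. (i, Suc m)) ` {1..m})"
    unfolding eq using d finite_OffPairs by (simp add: card_Un_disjoint)
  also have "card ((\<lambda>i. (i, Suc m)) ` {1..m}) = m" by (subst card_image) (auto simp: inj_on_def)
  finally show ?case using Suc by (simp add: numeral_2_eq_2)
qed

lemma sum_wt_A: assumes "1 \<le> k" "k \<le> M"
  shows "(\<Sum>q\<in>OffPairs M. wt q k) = M - 1"
proof -
  have "(\<Sum>q\<in>OffPairs M. wt q k) = (\<Sum>q\<in>OffPairs M. if fst q = k then 1 else 0) + (\<Sum>q\<in>OffPairs M. if snd q = k then 1 else 0)"
    unfolding wt_def by (simp add: sum.distrib)
  also have "(\<Sum>q\<in>OffPairs M. if fst q = k then 1 else 0) = card {q \<in> OffPairs M. fst q = k}"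
    using finite_OffPairs by (simp add: sum.inter_filter[symmetric])
  also have "{q \<in> OffPairs M. fst q = k} = (\<lambda>j. (k,j)) ` {k<..M}"
    using assms by (auto simp: OffPairs_def)
  also have "card \<dots> = M - k" by (subst card_image) (auto simp: inj_on_def)
  also have "(\<Sum>q\<in>OffPairs M. if snd q = k then 1 else 0) = card {q \<in> OffPairs M. snd q = k}"
    using finite_OffPairs by (simp add: sum.inter_filter[symmetric])
  also have "{q \<in> OffPairs M. snd q = k} = (\<lambda>i. (i,k)) ` {1..<k}"
    using assms by (auto simp: OffPairs_def)
  also have "card \<dots> = k - 1" by (subst card_image) (auto simp: inj_on_def)
  finally show ?thesis using assms by simp
qed

lemma sum_wt_A_out: assumes "M < k"
  shows "(\<Sum>q\<in>OffPairs M. wt q k) = 0"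
  using assms by (auto simp: wt_def OffPairs_def intro!: sum.neutral)

definition mS :: "nat \<Rightarrow> (nat \<times> nat) set \<Rightarrow> expvec" where
  "mS n S = (\<Sum>q\<in>S. ev q + ev (n,n)) + (\<Sum>q\<in>OffPairs (n-1) - S. ev (fst q, n) + ev (snd q, n))"

lemma A_props: "q \<in> OffPairs (n-1) \<Longrightarrow> q \<in> Pairs n \<and> (n,n) \<in> Pairs n \<and> (fst q, n) \<in> Pairs n \<and> (snd q, n) \<in> Pairs n \<and> fst q < snd q \<and> snd q < n \<and> 1 \<le> fst q"
  by (auto simp: OffPairs_def Pairs_def)

lemma mS_keys: "S \<subseteq> OffPairs (n-1) \<Longrightarrow> Poly_Mapping.keys (mS n S) \<subseteq> Pairs n"
  unfolding mS_def
  apply (rule order.trans[OF keys_add])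
  apply (rule Un_least)
   apply (rule keys_sum_sub)
   apply (rule order.trans[OF keys_add])
   using A_props apply fastforce
  apply (rule keys_sum_sub)
  apply (rule order.trans[OF keys_add])
  using A_props apply fastforce
  done

lemma mS_Vn: assumes S: "S \<subseteq> OffPairs (n-1)"
  shows "Vn n (mS n S) k = (\<Sum>q\<in>OffPairs (n-1). wt q k) + card (OffPairs (n-1)) * (if k = n then 2 else 0)"
proof -
  have s1: "(\<Sum>q\<in>S. Vn n (ev q + ev (n,n)) k) = (\<Sum>q\<in>S. wt q k + (if k = n then 2 else 0))"
  proof (rule sum.cong[OF refl])
    fix q assume "q \<in> S"
    then have q: "q \<in> OffPairs (n-1)" using S by blast
    show "Vn n (ev q + ev (n,n)) k = wt q k + (if k = n then 2 else 0)"
      using A_props[OF q] by (simp add: Vn_add Vn_single wt_def)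
  qed
  have s2: "(\<Sum>q\<in>OffPairs (n-1) - S. Vn n (ev (fst q, n) + ev (snd q, n)) k) = (\<Sum>q\<in>OffPairs (n-1) - S. wt q k + (if k = n then 2 else 0))"
  proof (rule sum.cong[OF refl])
    fix q assume "q \<in> OffPairs (n-1) - S"
    then have q: "q \<in> OffPairs (n-1)" by blast
    show "Vn n (ev (fst q, n) + ev (snd q, n)) k = wt q k + (if k = n then 2 else 0)"
      using A_props[OF q] by (simp add: Vn_add Vn_single wt_def)
  qed
  have "Vn n (mS n S) k = (\<Sum>q\<in>S. wt q k + (if k = n then 2 else 0)) + (\<Sum>q\<in>OffPairs (n-1) - S. wt q k + (if k = n then 2 else 0))"
    unfolding mS_def Vn_add[of n "sum _ _"] Vn_sum s1 s2 ..
  also have "\<dots> = (\<Sum>q\<in>OffPairs (n-1). wt q k + (if k = n then 2 else 0))"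
    using sum.subset_diff[OF S finite_OffPairs, of "\<lambda>q. wt q k + (if k = n then 2 else 0)"] by (simp only: add.commute)
  also have "\<dots> = (\<Sum>q\<in>OffPairs (n-1). wt q k) + card (OffPairs (n-1)) * (if k = n then 2 else 0)"
    by (simp add: sum.distrib)
  finally show ?thesis .
qed

lemma mS_par: assumes S: "S \<subseteq> OffPairs (n-1)" and q: "q \<in> OffPairs (n-1)"
  shows "lk (mS n S) q = (if q \<in> S then 1 else 0)"
proof -
  have "lk (mS n S) q = (\<Sum>q'\<in>S. if q' = q then 1 else 0) + (\<Sum>q'\<in>OffPairs (n-1) - S. 0)"
    unfolding mS_def lookup_add lookup_sum
    apply (intro arg_cong2[where f = "(+)"] sum.cong refl)
    using S q A_props[OF q] by (auto simp: lookup_add lookup_single when_def)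
  also have "\<dots> = (if q \<in> S then 1 else 0)"
    using S finite_subset[OF S finite_OffPairs] by (simp add: sum.delta)
  finally show ?thesis .
qed

lemma xvar_ev: "i \<le> j \<Longrightarrow> xvar i j = xmon (ev (i,j))"
  by (simp add: xvar_def)

lemma pn_expand: "p_n n = (\<Sum>S\<in>Pow (OffPairs (n-1)). xmon (mS n S) :: 'k::comm_ring_1 mpoly)"
proof -
  let ?A = "OffPairs (n-1)"
  have "p_n n = (\<Prod>q\<in>?A. xmon (ev q + ev (n,n)) + xmon (ev (fst q, n) + ev (snd q, n)) :: 'k mpoly)"
    unfolding p_n_def OffPairs_def
    apply (rule prod.cong[OF refl])
    apply (auto simp: xvar_ev xmon_mult)
    done
  also have "\<dots> = (\<Sum>S\<in>Pow ?A. (\<Prod>q\<in>S. xmon (ev q + ev (n,n))) * (\<Prod>q\<in>?A - S. xmon (ev (fst q, n) + ev (snd q, n))))"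
    by (rule prod_add[OF finite_OffPairs])
  also have "\<dots> = (\<Sum>S\<in>Pow ?A. xmon (mS n S))"
  proof (rule sum.cong[OF refl])
    fix S assume "S \<in> Pow ?A"
    then have fS: "finite S" using finite_subset finite_OffPairs by blast
    show "(\<Prod>q\<in>S. xmon (ev q + ev (n,n))) * (\<Prod>q\<in>?A - S. xmon (ev (fst q, n) + ev (snd q, n))) = (xmon (mS n S) :: 'k mpoly)"
      unfolding mS_def using fS finite_OffPairs by (simp add: prod_xmon xmon_mult)
  qed
  finally show ?thesis .
qed



lemma sum_wt_row: assumes "q \<in> OffPairs (n-1)"
  shows "(\<Sum>i\<in>{1..n-1}. wt q i) = 2"
proof -
  have "(\<Sum>i\<in>{1..n-1}. wt q i) = (\<Sum>i\<in>{1..n-1}. if fst q = i then 1 else 0) + (\<Sum>i\<in>{1..n-1}. if snd q = i then 1 else 0)"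
    unfolding wt_def by (simp add: sum.distrib)
  also have "\<dots> = 2" using assms by (auto simp: OffPairs_def)
  finally show ?thesis .
qed

lemma par_aux1: "(x::nat) + 2 * c = y \<Longrightarrow> even x \<longleftrightarrow> even y" by presburger
lemma par_aux2: "(T::nat) \<le> n - 1 \<Longrightarrow> (even T \<longleftrightarrow> even (n - 2)) \<Longrightarrow> n \<ge> 2 \<Longrightarrow> T \<le> n - 2" by presburger
lemma par_aux3: "(T::nat) \<le> B \<Longrightarrow> (even T \<longleftrightarrow> even B) \<Longrightarrow> 2 * ((B - T) div 2) = B - T" by presburger
lemma par_aux4: "2 * (((x::nat) - x mod 2) div 2) = x - x mod 2" by presburger

lemma construct:
  assumes n2: "n \<ge> 2" and S: "S \<subseteq> OffPairs (n-1)"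
   and bk: "\<forall>k\<in>{1..n-1}. n - 2 \<le> b k" and bn: "n - 2 \<le> b n"
   and par: "even (\<Sum>i\<in>{1..n-1}. b i) \<longleftrightarrow> even (b n)"
  shows "\<exists>u\<in>fiber n b. \<forall>q\<in>OffPairs (n-1). odd (lk u q) \<longleftrightarrow> q \<in> S"
proof -
  let ?A = "OffPairs (n-1)"
  have fS: "finite S" using S finite_subset finite_OffPairs by blast
  have SP: "q \<in> Pairs n" if "q \<in> S" for q using A_props[of q n] S that by blast
  define u0 where "u0 = (\<Sum>q\<in>S. ev q)"
  define d where "d k = (\<Sum>q\<in>S. wt q k)" for k
  have Vu0: "Vn n u0 k = d k" for k
    unfolding u0_def d_def Vn_sum
    by (rule sum.cong[OF refl]) (simp add: Vn_single[OF SP])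
  have d_le: "d k \<le> n - 2" if "k \<in> {1..n-1}" for k
  proof -
    have "d k \<le> (\<Sum>q\<in>?A. wt q k)" unfolding d_def by (rule sum_mono2[OF finite_OffPairs S]) auto
    also have "\<dots> = n - 2" using sum_wt_A[of k "n-1"] that by simp
    finally show ?thesis .
  qed
  have d_n: "d n = 0"
  proof -
    have "d n \<le> (\<Sum>q\<in>?A. wt q n)" unfolding d_def by (rule sum_mono2[OF finite_OffPairs S]) auto
    also have "\<dots> = 0" using sum_wt_A_out[of "n-1" n] n2 by simp
    finally show ?thesis by simp
  qed
  define t where "t i = (b i - d i) mod 2" for i
  define T where "T = (\<Sum>i\<in>{1..n-1}. t i)"
  define dd where "dd k = (if k = n then (b n - T) div 2 else (b k - d k - t k) div 2)" for k
  define u1 where "u1 = (\<Sum>i\<in>{1..n-1}. Poly_Mapping.single (i,n) (t i))"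
  define u2 where "u2 = (\<Sum>k\<in>{1..n}. Poly_Mapping.single (k,k) (dd k))"
  define u where "u = u0 + u1 + u2"
  have keys: "Poly_Mapping.keys u \<subseteq> Pairs n"
  proof -
    have K0: "Poly_Mapping.keys u0 \<subseteq> Pairs n" unfolding u0_def
      by (rule keys_sum_sub) (simp add: SP)
    have K1: "Poly_Mapping.keys u1 \<subseteq> Pairs n" unfolding u1_def
      by (rule keys_sum_sub) (auto simp: Pairs_def)
    have K2: "Poly_Mapping.keys u2 \<subseteq> Pairs n" unfolding u2_def
      by (rule keys_sum_sub) (auto simp: Pairs_def)
    have K01: "Poly_Mapping.keys (u0 + u1) \<subseteq> Pairs n"
      by (rule order.trans[OF keys_add]) (rule Un_least[OF K0 K1])
    show ?thesis unfolding u_def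
      by (rule order.trans[OF keys_add]) (rule Un_least[OF K01 K2])
  qed
  have Vu1: "Vn n u1 k = (if k = n then T else t k)" if "k \<in> {1..n}" for k
  proof -
    have "Vn n u1 k = (\<Sum>i\<in>{1..n-1}. t i * wt (i,n) k)"
      unfolding u1_def Vn_sum by (rule sum.cong[OF refl]) (auto simp: Vn_single Pairs_def)
    also have "\<dots> = (\<Sum>i\<in>{1..n-1}. if k = n then t i else (if i = k then t k else 0))"
      by (rule sum.cong[OF refl]) (auto simp: wt_def)
    also have "\<dots> = (if k = n then T else t k)"
      using that by (auto simp: T_def)
    finally show ?thesis .
  qed
  have Vu2: "Vn n u2 k = 2 * dd k" if "k \<in> {1..n}" for k
  proof -
    have "Vn n u2 k = (\<Sum>k'\<in>{1..n}. dd k' * wt (k',k') k)"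
      unfolding u2_def Vn_sum by (rule sum.cong[OF refl]) (auto simp: Vn_single Pairs_def)
    also have "\<dots> = (\<Sum>k'\<in>{1..n}. if k' = k then 2 * dd k else 0)"
      by (rule sum.cong[OF refl]) (auto simp: wt_def)
    also have "\<dots> = 2 * dd k" using that by simp
    finally show ?thesis .
  qed
  have sumd: "(\<Sum>i\<in>{1..n-1}. d i) = 2 * card S"
  proof -
    have "(\<Sum>i\<in>{1..n-1}. d i) = (\<Sum>q\<in>S. \<Sum>i\<in>{1..n-1}. wt q i)"
      unfolding d_def by (rule sum.swap)
    also have "\<dots> = (\<Sum>q\<in>S. 2)" by (rule sum.cong[OF refl]) (use S sum_wt_row in blast)
    finally show ?thesis by simp
  qed
  have dle: "d i \<le> b i" if "i \<in> {1..n-1}" for i using d_le[OF that] bk that by fastforce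
  have "(\<Sum>i\<in>{1..n-1}. b i - d i) + (\<Sum>i\<in>{1..n-1}. d i) = (\<Sum>i\<in>{1..n-1}. b i)"
    by (simp add: sum.distrib[symmetric] dle)
  then have "(\<Sum>i\<in>{1..n-1}. b i - d i) + 2 * card S = (\<Sum>i\<in>{1..n-1}. b i)"
    using sumd by simp
  then have pe1: "even (\<Sum>i\<in>{1..n-1}. b i - d i) \<longleftrightarrow> even (b n)"
    using par par_aux1 by blast
  have "even T \<longleftrightarrow> even (\<Sum>i\<in>{1..n-1}. b i - d i)"
    unfolding T_def by (rule sum_even_cong) (auto simp: t_def)
  with pe1 have Tpar: "even T \<longleftrightarrow> even (b n)" by simp
  have "T \<le> of_nat (card {1..n-1}) * 1" unfolding T_def by (rule sum_bounded_above) (auto simp: t_def)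
  then have Tle1: "T \<le> n - 1" by simp
  have Tle: "T \<le> b n"
  proof (cases "n - 1 \<le> b n")
    case True then show ?thesis using Tle1 by simp
  next
    case False
    then have "b n = n - 2" using bn by simp
    then show ?thesis using par_aux2[OF Tle1] Tpar n2 by simp
  qed
  have V: "\<forall>k\<in>{1..n}. Vn n u k = b k"
  proof
    fix k assume k: "k \<in> {1..n}"
    have Vu: "Vn n u k = d k + Vn n u1 k + 2 * dd k"
      unfolding u_def Vn_add Vu0 Vu2[OF k] ..
    show "Vn n u k = b k"
    proof (cases "k = n")
      case True
      have "2 * ((b n - T) div 2) = b n - T" using par_aux3[OF Tle Tpar] .
      then show ?thesis using Vu Vu1[OF k] True d_n Tle by (simp add: dd_def)
    next
      case False
      then have k1: "k \<in> {1..n-1}" using k by auto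
      have "2 * ((b k - d k - t k) div 2) = b k - d k - t k" unfolding t_def using par_aux4[of "b k - d k"] by simp
      moreover have "t k \<le> b k - d k" unfolding t_def by simp
      ultimately show ?thesis using Vu Vu1[OF k] False dle[OF k1] by (simp add: dd_def)
    qed
  qed
  have P: "\<forall>q\<in>?A. odd (lk u q) \<longleftrightarrow> q \<in> S"
  proof
    fix q assume q: "q \<in> ?A"
    have "lk u0 q = (\<Sum>q'\<in>S. if q' = q then 1 else 0)"
      unfolding u0_def lookup_sum by (rule sum.cong[OF refl]) (auto simp: lookup_single when_def)
    also have "\<dots> = (if q \<in> S then 1 else 0)" using fS by (simp add: sum.delta)
    finally have l0: "lk u0 q = (if q \<in> S then 1 else 0)" .
    have l1: "lk u1 q = 0" unfolding u1_def lookup_sum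
      using A_props[OF q] by (intro sum.neutral) (auto simp: lookup_single when_def)
    have l2: "lk u2 q = 0" unfolding u2_def lookup_sum
      using A_props[OF q] by (intro sum.neutral) (auto simp: lookup_single when_def)
    show "odd (lk u q) \<longleftrightarrow> q \<in> S" unfolding u_def lookup_add l0 l1 l2 by simp
  qed
  have "u \<in> fiber n b" unfolding fiber_def using keys V by simp
  then show ?thesis using P by blast
qed



lemma sig_even: assumes "even n" "n \<ge> 2"
  shows "2 * ((n-1) choose 2) = n - 2 + 2 * sigma (n-1)"
proof -
  obtain m where m: "n = 2*m + 2" using assms by (metis add.commute add_diff_inverse_nat dvd_minus_self even_add le_add_diff_inverse less_irrefl nat_dvd_not_less numeral_le_iff semiring_norm(69) zero_less_numeral evenE)
  have c: "(n-1) choose 2 = (2*m+1)*m"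
    unfolding m choose_two by simp
  have d: "(n-1) div 2 = m" unfolding m by simp
  have "m \<le> (2*m+1)*m" by simp
  then show ?thesis unfolding sigma_def c d using m by simp
qed

lemma sig_odd: assumes "odd n" "n \<ge> 2"
  shows "1 + 2 * ((n-1) choose 2) = n - 2 + 2 * (sigma (n-1) + 1)"
proof -
  obtain m where m: "n = 2*m + 3"
  proof -
    obtain k where "n = 2*k + 1" using assms(1) oddE by blast
    then show ?thesis using that[of "k - 1"] assms(2) by simp
  qed
  have c: "(n-1) choose 2 = (m+1)*(2*m+1)"
  proof -
    have "(n-1) choose 2 = (2*m+2)*(2*m+1) div 2" unfolding m choose_two by simp
    also have "(2*m+2)*(2*m+1) = 2 * ((m+1)*(2*m+1))" by simp
    finally show ?thesis by simp
  qed
  have d: "(n-1) div 2 = m + 1" unfolding m by simp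
  have "m + 1 \<le> (m+1)*(2*m+1)" by simp
  then show ?thesis unfolding sigma_def c d using m by simp
qed

lemma Vn_e: "n \<ge> 1 \<Longrightarrow> Vn n (Poly_Mapping.single (n,n) s) k = s * (if k = n then 2 else 0)"
  by (simp add: Vn_single Pairs_def wt_def)

lemma eA_lemma: "q \<in> OffPairs (n-1) \<Longrightarrow> lk (Poly_Mapping.single (n,n) s) q = 0"
  by (auto simp: lookup_single when_def OffPairs_def)

lemma eK_lemma: "n \<ge> 1 \<Longrightarrow> Poly_Mapping.keys (Poly_Mapping.single (n,n) s) \<subseteq> Pairs n"
  by (auto simp: Pairs_def)

lemma xvar_nn_pow: "xvar n n ^ s = (xmon (Poly_Mapping.single (n,n) s) :: 'k::comm_ring_1 mpoly)"
  by (simp add: xvar_pow)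

lemma sum_const_A: "(\<Sum>i\<in>{1..n-1}. (c::nat)) = (n-1) * c" by simp

lemma even_case:
  assumes "even n" "n \<ge> 2"
  shows "eqJ n (xvar n n ^ sigma (n - 1) * (p_plus_even n :: 'k::comm_ring_1 mpoly)) (p_n n)"
proof -
  let ?e = "Poly_Mapping.single (n,n) (sigma (n-1))"
  let ?b = "\<lambda>_::nat. n - 2"
  have "eqJ n (xmon ?e * class_sum n ?b) (\<Sum>S\<in>Pow (OffPairs (n-1)). xmon (mS n S) :: 'k mpoly)"
  proof (rule assemble)
    show "Poly_Mapping.keys ?e \<subseteq> Pairs n" using assms by (rule_tac eK_lemma) simp
    show "\<forall>q\<in>OffPairs (n-1). lk ?e q = 0" using eA_lemma by blast
    show "Poly_Mapping.keys (mS n S) \<subseteq> Pairs n" if "S \<subseteq> OffPairs (n-1)" for S using mS_keys[OF that] .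
    show "Vn n (mS n S) k = ?b k + Vn n ?e k" if S: "S \<subseteq> OffPairs (n-1)" and k: "k \<in> {1..n}" for S k
    proof (cases "k = n")
      case True
      then show ?thesis using mS_Vn[OF S, of k] sum_wt_A_out[of "n-1" n] assms card_OffPairs[of "n-1"]
          sig_even[OF assms] Vn_e[of n] by simp arith
    next
      case False
      then have k1: "1 \<le> k" "k \<le> n - 1" using k by auto
      have sw: "(\<Sum>q\<in>OffPairs (n-1). wt q k) = n - 2" using sum_wt_A[OF k1] by simp
      show ?thesis using mS_Vn[OF S, of k] sw False assms Vn_e[of n] by simp
    qed
    show "odd (lk (mS n S) q) \<longleftrightarrow> q \<in> S" if "S \<subseteq> OffPairs (n-1)" "q \<in> OffPairs (n-1)" for S q
      using mS_par[OF that] by simp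
    show "\<exists>u\<in>fiber n ?b. \<forall>q\<in>OffPairs (n-1). odd (lk u q) \<longleftrightarrow> q \<in> S" if "S \<subseteq> OffPairs (n-1)" for S
    proof (rule construct[OF assms(2) that])
      show "even (\<Sum>i\<in>{1..n-1}. ?b i) \<longleftrightarrow> even (?b n)" using assms by simp
    qed auto
  qed
  then show ?thesis unfolding p_plus_even_def xvar_nn_pow pn_expand .
qed

lemma odd_case:
  assumes "odd n" "n \<ge> 2" "i \<in> {1..n}"
  shows "eqJ n (xvar n n ^ (sigma (n - 1) + 1) * (p_plus_odd n i :: 'k::comm_ring_1 mpoly)) (xvar i n * p_n n)"
proof -
  let ?e = "Poly_Mapping.single (n,n) (sigma (n-1) + 1)"
  let ?b = "\<lambda>k. n - 2 + (if k = i then 1 else 0)"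
  let ?m = "\<lambda>S. ev (i,n) + mS n S"
  have iP: "(i,n) \<in> Pairs n" using assms by (auto simp: Pairs_def)
  have "eqJ n (xmon ?e * class_sum n ?b) (\<Sum>S\<in>Pow (OffPairs (n-1)). xmon (?m S) :: 'k mpoly)"
  proof (rule assemble)
    show "Poly_Mapping.keys ?e \<subseteq> Pairs n" using assms by (rule_tac eK_lemma) simp
    show "\<forall>q\<in>OffPairs (n-1). lk ?e q = 0" using eA_lemma by blast
    show "Poly_Mapping.keys (?m S) \<subseteq> Pairs n" if "S \<subseteq> OffPairs (n-1)" for S
      by (rule order.trans[OF keys_add]) (use mS_keys[OF that] iP in auto)
    show "Vn n (?m S) k = ?b k + Vn n ?e k" if S: "S \<subseteq> OffPairs (n-1)" and k: "k \<in> {1..n}" for S k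
    proof (cases "k = n")
      case True
      then show ?thesis using mS_Vn[OF S, of k] sum_wt_A_out[of "n-1" n] assms card_OffPairs[of "n-1"]
          sig_odd[OF assms(1,2)] Vn_e[of n] by (simp add: Vn_add Vn_single[OF iP] wt_def) arith
    next
      case False
      then have k1: "1 \<le> k" "k \<le> n - 1" using k by auto
      have sw: "(\<Sum>q\<in>OffPairs (n-1). wt q k) = n - 2" using sum_wt_A[OF k1] by simp
      have wi: "wt (i,n) k = (if k = i then 1 else 0)" using False by (auto simp: wt_def)
      show ?thesis using mS_Vn[OF S, of k] sw False assms Vn_e[of n] wi
        by (simp add: Vn_add Vn_single[OF iP])
    qed
    show "odd (lk (?m S) q) \<longleftrightarrow> q \<in> S" if "S \<subseteq> OffPairs (n-1)" "q \<in> OffPairs (n-1)" for S q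
      using mS_par[OF that] that(2) by (auto simp: lookup_add lookup_single when_def OffPairs_def)
    show "\<exists>u\<in>fiber n ?b. \<forall>q\<in>OffPairs (n-1). odd (lk u q) \<longleftrightarrow> q \<in> S" if "S \<subseteq> OffPairs (n-1)" for S
    proof (rule construct[OF assms(2) that])
      have "(\<Sum>j\<in>{1..n-1}. ?b j) = (n-1)*(n-2) + (\<Sum>j\<in>{1..n-1}. if j = i then 1 else 0)"
        by (simp add: sum.distrib)
      also have "(\<Sum>j\<in>{1..n-1}. if j = i then 1 else 0) = (if i \<in> {1..n-1} then 1 else (0::nat))"
        by (simp add: sum.delta)
      finally show "even (\<Sum>i\<in>{1..n-1}. ?b i) \<longleftrightarrow> even (?b n)" using assms by auto
    qed auto
  qed
  moreover have "xvar i n * p_n n = (\<Sum>S\<in>Pow (OffPairs (n-1)). xmon (?m S) :: 'k mpoly)"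
    using assms by (simp add: pn_expand sum_distrib_left xvar_ev xmon_mult)
  ultimately show ?thesis unfolding p_plus_odd_def xvar_nn_pow by simp
qed

theorem lemma2p17:
  fixes n :: nat
  assumes "n \<ge> 2"
  shows "(even n \<longrightarrow>
            eqJ n (xvar n n ^ sigma (n - 1) * (p_plus_even n :: 'k::field mpoly)) (p_n n))
       \<and> (odd n \<longrightarrow> (\<forall>i\<in>{1..n}.
            eqJ n (xvar n n ^ (sigma (n - 1) + 1) * (p_plus_odd n i :: 'k::field mpoly))
                  (xvar i n * p_n n)))"
proof (intro conjI impI ballI)
  assume "even n"
  then show "eqJ n (xvar n n ^ sigma (n - 1) * (p_plus_even n :: 'k::field mpoly)) (p_n n)"
    using even_case assms by blast
next
  fix i assume "odd n" "i \<in> {1..n}"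
  then show "eqJ n (xvar n n ^ (sigma (n - 1) + 1) * (p_plus_odd n i :: 'k::field mpoly)) (xvar i n * p_n n)"
    using odd_case assms by blast
qed

end
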